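(* Let $G$ be a finite group and $n$ a positive divisor of $|G|$. Then $G$ has at least $d(n)$ cyclic subgroups whose order divides $n$. Moreover the following are equivalent: (1) for every positive divisor $m$ of $n$, $G$ has exactly $m$ elements $x$ with $x^m=1$; (2) $G$ has exactly $d(n)$ cyclic subgroups whose order divides $n$; (3) the subgroup of $G$ generated by all cyclic subgroups of $G$ of order dividing $n$ is cyclic of order $n$.
   Context: $d(n)$ denotes the number of positive divisors of $n$. *)

theory Defs
  imports "HOL-Algebra.Algebra"
begin

definition num_divisors :: "nat \<Rightarrow> nat" where
  "num_divisors n = card {m. 0 < m \<and> m dvd n}"

definition cyclic_subgroup :: "('a, 'b) monoid_scheme \<Rightarrow> 'a set \<Rightarrow> bool" where
  "cyclic_subgroup G H \<longleftrightarrow> (\<exists>g \<in> carrier G. H = generate G {g})"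

end

theory Submission
  imports Defs
begin

definition sols :: "('a,'b) monoid_scheme \<Rightarrow> nat \<Rightarrow> 'a set" where
  "sols G m = {x \<in> carrier G. x [^]\<^bsub>G\<^esub> m = \<one>\<^bsub>G\<^esub>}"

lemma pow_sub: "x [^]\<^bsub>G\<lparr>carrier := H\<rparr>\<^esub> (n::nat) = x [^]\<^bsub>G\<^esub> n"
  by (simp add: nat_pow_def)

locale fgroup = group + assumes fin: "finite (carrier G)"

context group begin

lemma pow_gcd_one:
  assumes "x \<in> carrier G" "x [^] (a::nat) = \<one>" "x [^] (b::nat) = \<one>"
  shows "x [^] (gcd a b) = \<one>"
  using assms by (simp add: pow_eq_id)

lemma pow_dvd_one:
  assumes "x \<in> carrier G" "x [^] (a::nat) = \<one>" "a dvd b"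
  shows "x [^] b = \<one>"
  using assms by (auto simp add: pow_eq_id intro: dvd_trans)

lemma sub_pow_order:
  assumes "subgroup H G" "finite H" "x \<in> H"
  shows "x [^] card H = \<one>"
proof -
  interpret K: group "G\<lparr>carrier := H\<rparr>" using subgroup.subgroup_is_group[OF assms(1) is_group] .
  have "x [^]\<^bsub>G\<lparr>carrier := H\<rparr>\<^esub> order (G\<lparr>carrier := H\<rparr>) = \<one>\<^bsub>G\<lparr>carrier := H\<rparr>\<^esub>"
    using K.pow_order_eq_1 assms by simp
  thus ?thesis by (simp add: pow_sub order_def)
qed

lemma cauchy_lite:
  assumes fin: "finite (carrier G)" and q: "Factorial_Ring.prime q" "q dvd order G"
  shows "\<exists>x\<in>carrier G. x \<noteq> \<one> \<and> x [^] q = \<one>"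
proof -
  obtain m where m: "order G = q ^ 1 * m" using q by auto
  obtain H where H: "subgroup H G" "card H = q"
    using sylow_thm[OF q(1) is_group m fin] by auto
  have finH: "finite H" using H(1) fin subgroup.subset finite_subset by blast
  have "card H > 1" using H q prime_gt_1_nat by auto
  have "\<exists>x\<in>H. x \<noteq> \<one>"
  proof (rule ccontr)
    assume "\<not> ?thesis"
    hence "H \<subseteq> {\<one>}" by auto
    hence "card H \<le> 1" using card_mono[of "{\<one>}" H] by auto
    with \<open>card H > 1\<close> show False by simp
  qed
  then obtain x where x: "x \<in> H" "x \<noteq> \<one>" by auto
  have "x [^] q = \<one>" using sub_pow_order[OF H(1) finH x(1)] unfolding H(2) .
  moreover have "x \<in> carrier G" using subgroup.mem_carrier[OF H(1) x(1)] .
  ultimately show ?thesis using x(2) by blast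
qed

end

context group begin

lemma inv_commute:
  assumes "g \<in> carrier G" "h \<in> carrier G" "g \<otimes> h = h \<otimes> g"
  shows "inv g \<otimes> h = h \<otimes> inv g"
proof -
  have "inv g \<otimes> h = inv g \<otimes> h \<otimes> (g \<otimes> inv g)" using assms(1,2) by simp
  also have "\<dots> = inv g \<otimes> (h \<otimes> g) \<otimes> inv g" using assms(1,2) by (simp add: m_assoc)
  also have "\<dots> = inv g \<otimes> (g \<otimes> h) \<otimes> inv g" using assms(3) by simp
  also have "\<dots> = h \<otimes> inv g" by (metis assms(1,2) inv_closed l_inv l_one m_assoc m_closed)
  finally show ?thesis .
qed

lemma dec_card:
  assumes fin: "finite (carrier G)" and cop: "coprime a b" and a: "a > 0"
  shows "card (sols G (a*b)) = (\<Sum>y\<in>sols G a. card {z \<in> carrier G. z [^] b = \<one> \<and> y \<otimes> z = z \<otimes> y})"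
proof -
  define P where "P = Sigma (sols G a) (\<lambda>y. {z \<in> carrier G. z [^] b = \<one> \<and> y \<otimes> z = z \<otimes> y})"
  have finP: "finite (sols G a)" using fin unfolding sols_def by auto
  have cardP: "card P = (\<Sum>y\<in>sols G a. card {z \<in> carrier G. z [^] b = \<one> \<and> y \<otimes> z = z \<otimes> y})"
    unfolding P_def by (rule card_SigmaI[OF finP]) (use fin in auto)
  obtain u v where uv: "a * u = b * v + 1"
    using bezout_nat[of a b] a cop by (auto simp: coprime_iff_gcd_eq_1)
  have key: "(y \<otimes> z) [^] (a*u) = z" if "(y,z) \<in> P" for y z
  proof -
    have y: "y \<in> carrier G" "y [^] a = \<one>" and z: "z \<in> carrier G" "z [^] b = \<one>" "y \<otimes> z = z \<otimes> y"
      using that unfolding P_def sols_def by auto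
    have "(y \<otimes> z) [^] (a*u) = y [^] (a*u) \<otimes> z [^] (a*u)" using pow_mult_distrib y z by blast
    also have "y [^] (a*u) = \<one>" using y by (simp add: nat_pow_pow[symmetric])
    also have "z [^] (a*u) = z [^] (b*v) \<otimes> z [^] (1::nat)" using z uv by (simp add: nat_pow_mult)
    also have "z [^] (b*v) = \<one>" using z by (simp add: nat_pow_pow[symmetric])
    finally show ?thesis using z by simp
  qed
  have inj: "inj_on (\<lambda>(y,z). y \<otimes> z) P"
  proof (rule inj_onI, clarify)
    fix y z y' z' assume p: "(y,z) \<in> P" "(y',z') \<in> P" and eq: "y \<otimes> z = y' \<otimes> z'"
    have zz: "z = z'" using key[OF p(1)] key[OF p(2)] eq by simp
    have "y \<in> carrier G" "y' \<in> carrier G" "z \<in> carrier G" using p unfolding P_def sols_def by auto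
    thus "y = y' \<and> z = z'" using eq zz r_cancel by auto
  qed
  have img: "(\<lambda>(y,z). y \<otimes> z) ` P = sols G (a*b)"
  proof
    show "(\<lambda>(y,z). y \<otimes> z) ` P \<subseteq> sols G (a*b)"
    proof clarify
      fix y z assume p: "(y,z) \<in> P"
      have y: "y \<in> carrier G" "y [^] a = \<one>" and z: "z \<in> carrier G" "z [^] b = \<one>" "y \<otimes> z = z \<otimes> y"
        using p unfolding P_def sols_def by auto
      have "(y \<otimes> z) [^] (a*b) = y [^] (a*b) \<otimes> z [^] (a*b)" using pow_mult_distrib y z by blast
      also have "y [^] (a*b) = \<one>" using y by (simp add: nat_pow_pow[symmetric])
      also have "z [^] (a*b) = (z [^] b) [^] a" using z(1) by (simp add: nat_pow_pow mult.commute)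
      also have "\<dots> = \<one>" using z by simp
      finally show "y \<otimes> z \<in> sols G (a*b)" using y z unfolding sols_def by simp
    qed
  next
    show "sols G (a*b) \<subseteq> (\<lambda>(y,z). y \<otimes> z) ` P"
    proof
      fix x assume x: "x \<in> sols G (a*b)"
      have xc: "x \<in> carrier G" and x1: "x [^] (a*b) = \<one>" using x unfolding sols_def by auto
      define z where "z = x [^] (a*u)"
      define y where "y = inv (x [^] (b*v))"
      have zc: "z \<in> carrier G" "y \<in> carrier G" using xc unfolding z_def y_def by auto
      have "z = x [^] (b*v) \<otimes> x" using xc uv unfolding z_def by (simp add: nat_pow_mult[symmetric])
      hence yz: "y \<otimes> z = x" unfolding y_def using xc by (simp add: m_assoc[symmetric])
      have "y [^] a = inv ((x [^] (a*b)) [^] v)" unfolding y_def using xc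
        by (simp add: nat_pow_inv nat_pow_pow mult.commute mult.left_commute)
      hence ya: "y [^] a = \<one>" using x1 by simp
      have "z [^] b = (x [^] (a*b)) [^] u" unfolding z_def using xc
        by (simp add: nat_pow_pow mult.commute mult.left_commute)
      hence zb: "z [^] b = \<one>" using x1 by simp
      have "x [^] (b*v) \<otimes> z = z \<otimes> x [^] (b*v)" unfolding z_def using xc nat_pow_comm by simp
      hence com: "y \<otimes> z = z \<otimes> y" unfolding y_def using inv_commute xc zc by simp
      have "(y,z) \<in> P" unfolding P_def sols_def using ya zb com zc by auto
      thus "x \<in> (\<lambda>(y,z). y \<otimes> z) ` P" using yz by force
    qed
  qed
  have "card (sols G (a*b)) = card P" using card_image[OF inj] img by simp
  thus ?thesis using cardP by simp
qed

end

context group begin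

lemma cyc_sub_carrier: "x \<in> carrier G \<Longrightarrow> generate G {x} \<subseteq> carrier G"
  by (simp add: generate_incl)

lemma cyc_card: "x \<in> carrier G \<Longrightarrow> card (generate G {x}) = ord x"
  using generate_pow_card by simp

lemma cyc_mem: "x \<in> carrier G \<Longrightarrow> x \<in> generate G {x}"
  by (simp add: generate.incl)

lemma cyc_pow_mem: "x \<in> carrier G \<Longrightarrow> x [^] (k::nat) \<in> generate G {x}"
proof -
  assume x: "x \<in> carrier G"
  have "x [^] (int k) \<in> generate G {x}" unfolding generate_pow[OF x] by blast
  thus ?thesis by (simp add: int_pow_int)
qed

lemma cyc_sub:
  assumes "x \<in> carrier G" "y \<in> generate G {x}"
  shows "generate G {y} \<subseteq> generate G {x}"
  using assms generate_subgroup_incl generate_is_subgroup by simp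

lemma cyc_elem:
  assumes fin: "finite (carrier G)" and x: "x \<in> carrier G" and y: "y \<in> generate G {x}"
  shows "\<exists>k\<in>{1..ord x}. y = x [^] k"
proof -
  have "y \<in> {x[^]k | k. k \<in> {0 .. ord x - 1}}"
    using y generate_pow_on_finite_carrier[OF fin x] ord_elems[OF fin x] by auto
  then obtain k where k: "k \<in> {0 .. ord x - 1}" "y = x [^] k" by auto
  have o: "ord x \<ge> 1" using ord_ge_1[OF fin x] .
  show ?thesis
  proof (cases "k = 0")
    case True
    hence "y = x [^] ord x" using k x by simp
    thus ?thesis using o by auto
  next
    case False thus ?thesis using k o by auto
  qed
qed

lemma cyc_eq_card:
  assumes fin: "finite (carrier G)" and x: "x \<in> carrier G" and y: "y \<in> generate G {x}"
    and o: "ord y = ord x"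
  shows "generate G {y} = generate G {x}"
proof -
  have yc: "y \<in> carrier G" using y cyc_sub_carrier[OF x] by auto
  have "finite (generate G {x})" using fin cyc_sub_carrier[OF x] finite_subset by blast
  thus ?thesis using card_subset_eq cyc_sub[OF x y] cyc_card[OF x] cyc_card[OF yc] o by metis
qed

lemma gens_card:
  assumes fin: "finite (carrier G)" and x: "x \<in> carrier G"
  shows "card {y \<in> carrier G. generate G {y} = generate G {x}} = phi' (ord x)"
proof -
  let ?K = "{k. 1 \<le> k \<and> k \<le> ord x \<and> coprime k (ord x)}"
  have eq: "{y \<in> carrier G. generate G {y} = generate G {x}} = (\<lambda>k. x [^] k) ` ?K"
  proof
    show "{y \<in> carrier G. generate G {y} = generate G {x}} \<subseteq> (\<lambda>k. x [^] k) ` ?K"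
    proof clarify
      fix y assume yc: "y \<in> carrier G" and g: "generate G {y} = generate G {x}"
      have "y \<in> generate G {x}" using g cyc_mem[OF yc] by auto
      then obtain k where k: "k \<in> {1..ord x}" "y = x [^] k" using cyc_elem[OF fin x] by blast
      have "ord y = ord x" using cyc_card[OF yc] cyc_card[OF x] g by simp
      hence "coprime k (ord x)" using pow_ord_eq_ord_iff[OF fin x] k by simp
      thus "y \<in> (\<lambda>k. x [^] k) ` ?K" using k by auto
    qed
  next
    show "(\<lambda>k. x [^] k) ` ?K \<subseteq> {y \<in> carrier G. generate G {y} = generate G {x}}"
    proof clarify
      fix k assume k: "1 \<le> k" "k \<le> ord x" "coprime k (ord x)"
      have o: "ord (x [^] k) = ord x" using pow_ord_eq_ord_iff[OF fin x] k by simp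
      show "x [^] k \<in> carrier G \<and> generate G {x [^] k} = generate G {x}"
        using cyc_eq_card[OF fin x cyc_pow_mem[OF x] o] x by simp
    qed
  qed
  have inj: "inj_on (\<lambda>k. x [^] k) ?K"
    by (rule inj_on_subset[OF ord_inj'[OF x]]) auto
  have "card ((\<lambda>k. x [^] k) ` ?K) = card ?K" using card_image[OF inj] .
  thus ?thesis using eq by (simp add: phi'_def)
qed

end

context group begin

abbreviation conj_act where "conj_act \<equiv> (\<lambda>g. (\<lambda>h \<in> carrier G. g \<otimes> h \<otimes> (inv g)))"

lemma conj_eq_iff:
  assumes "g \<in> carrier G" "x \<in> carrier G"
  shows "g \<otimes> x \<otimes> inv g = x \<longleftrightarrow> g \<otimes> x = x \<otimes> g"
proof
  assume "g \<otimes> x \<otimes> inv g = x"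
  hence "g \<otimes> x \<otimes> inv g \<otimes> g = x \<otimes> g" by simp
  thus "g \<otimes> x = x \<otimes> g" using assms by (simp add: m_assoc)
next
  assume "g \<otimes> x = x \<otimes> g"
  thus "g \<otimes> x \<otimes> inv g = x" using assms by (simp add: m_assoc)
qed

lemma stab_eq:
  assumes "x \<in> carrier G"
  shows "stabilizer G conj_act x = {g \<in> carrier G. g \<otimes> x = x \<otimes> g}"
  using assms conj_eq_iff unfolding stabilizer_def by auto

lemma cent_subgroup:
  assumes "x \<in> carrier G"
  shows "subgroup {g \<in> carrier G. g \<otimes> x = x \<otimes> g} G"
proof -
  interpret A: group_action G "carrier G" conj_act by (rule action_by_conjugation)
  show ?thesis using A.stabilizer_subgroup[OF assms] stab_eq[OF assms] by simp
qed

lemma orbit_cent_card: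
  assumes "x \<in> carrier G"
  shows "card (orbit G conj_act x) * card {g \<in> carrier G. g \<otimes> x = x \<otimes> g} = order G"
proof -
  interpret A: group_action G "carrier G" conj_act by (rule action_by_conjugation)
  show ?thesis using A.orbit_stabilizer_theorem[OF assms] stab_eq[OF assms] by simp
qed

lemma class_sum_dvd:
  assumes fin: "finite (carrier G)"
    and inv: "\<And>y g. y \<in> carrier G \<Longrightarrow> g \<in> carrier G \<Longrightarrow> F (g \<otimes> y \<otimes> inv g) = F y"
    and dv: "\<And>y. y \<in> carrier G \<Longrightarrow> (r::nat) dvd card (orbit G conj_act y) * F y"
  shows "r dvd (\<Sum>y\<in>carrier G. F y)"
proof -
  interpret A: group_action G "carrier G" conj_act by (rule action_by_conjugation)
  have "(\<Sum>y\<in>carrier G. F y) = (\<Sum>orb\<in>orbits G (carrier G) conj_act. \<Sum>y\<in>orb. F y)"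
    using A.disjoint_sum[OF fin, of F] by simp
  also have "r dvd \<dots>"
  proof (rule dvd_sum)
    fix orb assume "orb \<in> orbits G (carrier G) conj_act"
    then obtain x where x: "x \<in> carrier G" and orb: "orb = orbit G conj_act x"
      unfolding orbits_def by auto
    have "\<And>y. y \<in> orb \<Longrightarrow> F y = F x"
    proof -
      fix y assume "y \<in> orb"
      then obtain g where g: "g \<in> carrier G" "y = conj_act g x" unfolding orb orbit_def by auto
      hence "y = g \<otimes> x \<otimes> inv g" using x by simp
      thus "F y = F x" using inv x g by simp
    qed
    hence "(\<Sum>y\<in>orb. F y) = card orb * F x" by simp
    thus "r dvd (\<Sum>y\<in>orb. F y)" using dv[OF x] orb by simp
  qed
  finally show ?thesis .
qed

end

context group begin

lemma torsion_central_subgroup: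
  "subgroup {y \<in> carrier G. (\<forall>g\<in>carrier G. g \<otimes> y = y \<otimes> g) \<and> y [^] (k::nat) = \<one>} G"
  (is "subgroup ?W G")
proof (rule subgroupI)
  show "?W \<subseteq> carrier G" by blast
  have "\<one> \<in> ?W" by simp
  thus "?W \<noteq> {}" by blast
next
  fix y assume y: "y \<in> ?W"
  hence yc: "y \<in> carrier G" by blast
  have "\<forall>g\<in>carrier G. g \<otimes> inv y = inv y \<otimes> g"
  proof
    fix g assume g: "g \<in> carrier G"
    have "g \<otimes> y = y \<otimes> g" using y g by blast
    hence "y \<otimes> g = g \<otimes> y" by (rule sym)
    thus "g \<otimes> inv y = inv y \<otimes> g" using inv_commute[OF yc g] by simp
  qed
  moreover have "inv y [^] k = \<one>" using y yc by (simp add: nat_pow_inv)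
  ultimately show "inv y \<in> ?W" using yc by blast
next
  fix y z assume y: "y \<in> ?W" and z: "z \<in> ?W"
  hence yc: "y \<in> carrier G" and zc: "z \<in> carrier G" by blast+
  have c1: "\<forall>g\<in>carrier G. g \<otimes> (y \<otimes> z) = (y \<otimes> z) \<otimes> g"
  proof
    fix g assume g: "g \<in> carrier G"
    have gy: "g \<otimes> y = y \<otimes> g" using y g by blast
    have gz: "g \<otimes> z = z \<otimes> g" using z g by blast
    have "g \<otimes> (y \<otimes> z) = (g \<otimes> y) \<otimes> z" using g yc zc by (simp add: m_assoc)
    also have "\<dots> = (y \<otimes> g) \<otimes> z" by (simp only: gy)
    also have "\<dots> = y \<otimes> (g \<otimes> z)" using g yc zc by (simp add: m_assoc)
    also have "\<dots> = y \<otimes> (z \<otimes> g)" by (simp only: gz)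
    also have "\<dots> = (y \<otimes> z) \<otimes> g" using g yc zc by (simp add: m_assoc)
    finally show "g \<otimes> (y \<otimes> z) = (y \<otimes> z) \<otimes> g" .
  qed
  have "z \<otimes> y = y \<otimes> z" using y zc by blast
  hence "y \<otimes> z = z \<otimes> y" by (rule sym)
  hence "(y \<otimes> z) [^] k = y [^] k \<otimes> z [^] k" using pow_mult_distrib yc zc by blast
  moreover have "y [^] k = \<one>" "z [^] k = \<one>" using y z by blast+
  ultimately have "(y \<otimes> z) [^] k = \<one>" by simp
  thus "y \<otimes> z \<in> ?W" using c1 yc zc by blast
qed

end

context group begin
lemma not_coprime_prime:
  fixes a b :: nat
  assumes "\<not> coprime a b"
  shows "\<exists>q. Factorial_Ring.prime q \<and> q dvd a \<and> q dvd b"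
proof -
  have "gcd a b \<noteq> 1" using assms by (simp add: coprime_iff_gcd_eq_1)
  then obtain q where "Factorial_Ring.prime q" "q dvd gcd a b" using prime_factor_nat by blast
  thus ?thesis by auto
qed

lemma torsion_central_coprime:
  assumes fin: "finite (carrier G)" and p: "Factorial_Ring.prime p" and pr: "\<not> p dvd r"
  shows "coprime (card {y \<in> carrier G. (\<forall>g\<in>carrier G. g \<otimes> y = y \<otimes> g) \<and> y [^] (p^j) = \<one>}) r"
    (is "coprime (card ?W) r")
proof (rule ccontr)
  assume "\<not> ?thesis"
  then obtain q where q: "Factorial_Ring.prime q" "q dvd card ?W" "q dvd r" using not_coprime_prime by blast
  have sg: "subgroup ?W G" by (rule torsion_central_subgroup)
  interpret H: group "G\<lparr>carrier := ?W\<rparr>" using subgroup.subgroup_is_group[OF sg is_group] .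
  have "finite (carrier (G\<lparr>carrier := ?W\<rparr>))" using fin by simp
  moreover have "q dvd order (G\<lparr>carrier := ?W\<rparr>)" using q by (simp add: order_def)
  ultimately obtain x where x: "x \<in> ?W" "x \<noteq> \<one>" "x [^] q = \<one>"
    using H.cauchy_lite[OF _ q(1)] by (auto simp: pow_sub)
  have xc: "x \<in> carrier G" and xp: "x [^] (p^j) = \<one>" using x by auto
  have "q \<noteq> p" using q(3) pr by auto
  hence "coprime q p" using q(1) p by (simp add: primes_coprime)
  hence "coprime q (p^j)" by simp
  hence "x [^] (1::nat) = \<one>" using pow_gcd_one[OF xc x(3) xp] by (simp add: coprime_iff_gcd_eq_1)
  thus False using x(2) xc by simp
qed

end

lemma dvd_gcd_trick:
  fixes r a c w :: nat
  assumes "r dvd a * c" "gcd r c dvd w"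
  shows "r dvd a * w"
proof -
  have "r dvd gcd (a * r) (a * c)" using assms(1) by simp
  also have "gcd (a * r) (a * c) = a * gcd r c" by (simp add: gcd_mult_distrib_nat)
  also have "a * gcd r c dvd a * w" using assms(2) by (simp add: mult_dvd_mono)
  finally show ?thesis .
qed

lemma phi'_prime_power:
  assumes p: "Factorial_Ring.prime (p::nat)"
  shows "p ^ e dvd phi' (p ^ Suc e)"
proof -
  have p0: "p > 0" using p prime_gt_0_nat by blast
  have D: "{d. d dvd p ^ Suc e} = insert (p ^ Suc e) {d. d dvd p ^ e}"
  proof -
    have "d dvd p ^ Suc e \<longleftrightarrow> d = p ^ Suc e \<or> d dvd p ^ e" for d
    proof
      assume "d dvd p ^ Suc e"
      then obtain i where i: "i \<le> Suc e" "d = p ^ i" using divides_primepow_nat[OF p] by blast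
      show "d = p ^ Suc e \<or> d dvd p ^ e"
      proof (cases "i = Suc e")
        case False hence "i \<le> e" using i by simp
        thus ?thesis using i by (simp add: le_imp_power_dvd)
      qed (use i in simp)
    next
      assume "d = p ^ Suc e \<or> d dvd p ^ e"
      thus "d dvd p ^ Suc e" by (auto intro: dvd_trans[of d "p^e"])
    qed
    thus ?thesis by auto
  qed
  have nin: "p ^ Suc e \<notin> {d. d dvd p ^ e}"
  proof
    assume "p ^ Suc e \<in> {d. d dvd p ^ e}"
    hence "p ^ Suc e \<le> p ^ e" using p0 by (simp add: dvd_imp_le)
    thus False using prime_gt_1_nat[OF p] by simp
  qed
  have fin: "finite {d. d dvd p ^ e}" using p0 by simp
  have "p ^ Suc e = (\<Sum>d | d dvd p ^ Suc e. phi' d)" using sum_phi'_factors[of "p ^ Suc e"] p0 by simp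
  also have "\<dots> = phi' (p ^ Suc e) + (\<Sum>d | d dvd p ^ e. phi' d)"
    unfolding D using sum.insert[OF fin nin] by simp
  also have "(\<Sum>d | d dvd p ^ e. phi' d) = p ^ e" using sum_phi'_factors[of "p ^ e"] p0 by simp
  finally have "phi' (p ^ Suc e) = p ^ e * (p - 1)" by (simp add: algebra_simps)
  thus ?thesis by simp
qed

context group begin

lemma inv_cancel_l [simp]: "g \<in> carrier G \<Longrightarrow> x \<in> carrier G \<Longrightarrow> inv g \<otimes> (g \<otimes> x) = x"
  by (simp add: m_assoc[symmetric])
lemma inv_cancel_r [simp]: "g \<in> carrier G \<Longrightarrow> x \<in> carrier G \<Longrightarrow> g \<otimes> (inv g \<otimes> x) = x"
  by (simp add: m_assoc[symmetric])

lemma conj_pow: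
  assumes "g \<in> carrier G" "a \<in> carrier G"
  shows "(g \<otimes> a \<otimes> inv g) [^] (k::nat) = g \<otimes> a [^] k \<otimes> inv g"
proof (induction k)
  case 0 thus ?case using assms by simp
next
  case (Suc k)
  have "(g \<otimes> a \<otimes> inv g) [^] Suc k = (g \<otimes> a [^] k \<otimes> inv g) \<otimes> (g \<otimes> a \<otimes> inv g)" using Suc by simp
  also have "\<dots> = g \<otimes> (a [^] k \<otimes> (inv g \<otimes> g) \<otimes> a) \<otimes> inv g" using assms by (simp add: m_assoc)
  also have "\<dots> = g \<otimes> a [^] Suc k \<otimes> inv g" using assms by (simp add: m_assoc)
  finally show ?case .
qed

lemma conj_mult:
  assumes "g \<in> carrier G" "a \<in> carrier G" "b \<in> carrier G"
  shows "(g \<otimes> a \<otimes> inv g) \<otimes> (g \<otimes> b \<otimes> inv g) = g \<otimes> (a \<otimes> b) \<otimes> inv g"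
proof -
  have "(g \<otimes> a \<otimes> inv g) \<otimes> (g \<otimes> b \<otimes> inv g) = g \<otimes> (a \<otimes> (inv g \<otimes> g) \<otimes> b) \<otimes> inv g"
    using assms by (simp add: m_assoc)
  thus ?thesis using assms by simp
qed

lemma conj_back:
  assumes "g \<in> carrier G" "a \<in> carrier G"
  shows "inv g \<otimes> (g \<otimes> a \<otimes> inv g) \<otimes> inv (inv g) = a"
proof -
  have "inv g \<otimes> (g \<otimes> a \<otimes> inv g) \<otimes> inv (inv g) = (inv g \<otimes> g) \<otimes> a \<otimes> (inv g \<otimes> g)"
    using assms by (simp add: m_assoc)
  thus ?thesis using assms by simp
qed

definition wz :: "nat \<Rightarrow> 'a \<Rightarrow> 'a set" where
  "wz r y = {z \<in> carrier G. z [^] r = \<one> \<and> y \<otimes> z = z \<otimes> y}"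

lemma wz_conj_sub:
  assumes g: "g \<in> carrier G" and y: "y \<in> carrier G"
  shows "(\<lambda>z. g \<otimes> z \<otimes> inv g) ` wz r y \<subseteq> wz r (g \<otimes> y \<otimes> inv g)"
proof clarify
  fix z assume "z \<in> wz r y"
  hence z: "z \<in> carrier G" "z [^] r = \<one>" "y \<otimes> z = z \<otimes> y" unfolding wz_def by auto
  have "(g \<otimes> z \<otimes> inv g) [^] r = \<one>" using conj_pow[OF g z(1)] z g by simp
  moreover have "(g \<otimes> y \<otimes> inv g) \<otimes> (g \<otimes> z \<otimes> inv g) = (g \<otimes> z \<otimes> inv g) \<otimes> (g \<otimes> y \<otimes> inv g)"
    using conj_mult[OF g y z(1)] conj_mult[OF g z(1) y] z(3) by simp
  ultimately show "g \<otimes> z \<otimes> inv g \<in> wz r (g \<otimes> y \<otimes> inv g)" unfolding wz_def using g z by simp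
qed

lemma wz_conj_le:
  assumes fin: "finite (carrier G)" and g: "g \<in> carrier G" and y: "y \<in> carrier G"
  shows "card (wz r y) \<le> card (wz r (g \<otimes> y \<otimes> inv g))"
proof -
  have inj: "inj_on (\<lambda>z. g \<otimes> z \<otimes> inv g) (wz r y)"
    by (rule inj_onI) (use g in \<open>auto simp: wz_def\<close>)
  have "finite (wz r (g \<otimes> y \<otimes> inv g))" using fin unfolding wz_def by simp
  thus ?thesis using card_inj_on_le[OF inj wz_conj_sub[OF g y]] by simp
qed

lemma wz_conj:
  assumes fin: "finite (carrier G)" and g: "g \<in> carrier G" and y: "y \<in> carrier G"
  shows "card (wz r (g \<otimes> y \<otimes> inv g)) = card (wz r y)"
proof -
  have "card (wz r (g \<otimes> y \<otimes> inv g)) \<le> card (wz r (inv g \<otimes> (g \<otimes> y \<otimes> inv g) \<otimes> inv (inv g)))"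
    by (rule wz_conj_le) (use fin g y in auto)
  also have "\<dots> = card (wz r y)" using conj_back[OF g y] by simp
  finally show ?thesis using wz_conj_le[OF fin g y, where r=r] by simp
qed

lemma central_conj:
  assumes g: "g \<in> carrier G" and y: "y \<in> carrier G"
  shows "(\<forall>h\<in>carrier G. h \<otimes> (g \<otimes> y \<otimes> inv g) = (g \<otimes> y \<otimes> inv g) \<otimes> h) \<longleftrightarrow> (\<forall>h\<in>carrier G. h \<otimes> y = y \<otimes> h)"
proof
  assume c: "\<forall>h\<in>carrier G. h \<otimes> y = y \<otimes> h"
  have "g \<otimes> y = y \<otimes> g" using c g by blast
  hence "g \<otimes> y \<otimes> inv g = y" using conj_eq_iff[OF g y] by simp
  thus "\<forall>h\<in>carrier G. h \<otimes> (g \<otimes> y \<otimes> inv g) = (g \<otimes> y \<otimes> inv g) \<otimes> h" using c by simp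
next
  assume c: "\<forall>h\<in>carrier G. h \<otimes> (g \<otimes> y \<otimes> inv g) = (g \<otimes> y \<otimes> inv g) \<otimes> h"
  have yc: "g \<otimes> y \<otimes> inv g \<in> carrier G" using g y by simp
  have ig: "inv g \<in> carrier G" using g by simp
  have "inv g \<otimes> (g \<otimes> y \<otimes> inv g) = (g \<otimes> y \<otimes> inv g) \<otimes> inv g" using c ig by blast
  hence "inv g \<otimes> (g \<otimes> y \<otimes> inv g) \<otimes> inv (inv g) = g \<otimes> y \<otimes> inv g"
    using conj_eq_iff[OF ig yc] by simp
  hence "y = g \<otimes> y \<otimes> inv g" using conj_back[OF g y] by simp
  thus "\<forall>h\<in>carrier G. h \<otimes> y = y \<otimes> h" using c by simp
qed

end

context group begin

lemma noncentral_dvd: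
  assumes fin: "finite (carrier G)" and y: "y \<in> carrier G"
    and nc: "\<not> (\<forall>h\<in>carrier G. h \<otimes> y = y \<otimes> h)"
    and IH: "\<And>H m. subgroup H G \<Longrightarrow> card H < order G \<Longrightarrow> m dvd card H \<Longrightarrow> m dvd card (sols (G\<lparr>carrier := H\<rparr>) m)"
    and r: "r dvd order G"
  shows "r dvd card (orbit G conj_act y) * card (wz r y)"
proof -
  define C where "C = {g \<in> carrier G. g \<otimes> y = y \<otimes> g}"
  have sg: "subgroup C G" unfolding C_def by (rule cent_subgroup[OF y])
  have finC: "finite C" using fin unfolding C_def by simp
  obtain h where h: "h \<in> carrier G" "h \<otimes> y \<noteq> y \<otimes> h" using nc by blast
  have "C \<subset> carrier G" using h unfolding C_def by auto
  hence ltC: "card C < order G" unfolding order_def using fin psubset_card_mono by blast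
  define r' where "r' = gcd r (card C)"
  have "r' dvd card C" unfolding r'_def by simp
  hence d1: "r' dvd card (sols (G\<lparr>carrier := C\<rparr>) r')" using IH[OF sg ltC] by blast
  have "sols (G\<lparr>carrier := C\<rparr>) r' = wz r y"
  proof -
    have "x [^] r' = \<one> \<longleftrightarrow> x [^] r = \<one>" if x: "x \<in> C" for x
    proof -
      have xc: "x \<in> carrier G" using x unfolding C_def by auto
      have xo: "x [^] card C = \<one>" using sub_pow_order[OF sg finC x] .
      show ?thesis
      proof
        assume "x [^] r' = \<one>" thus "x [^] r = \<one>" using pow_dvd_one[OF xc] unfolding r'_def by auto
      next
        assume "x [^] r = \<one>" thus "x [^] r' = \<one>" using pow_gcd_one[OF xc _ xo] unfolding r'_def by auto
      qed
    qed
    thus ?thesis unfolding sols_def wz_def C_def by (auto simp: pow_sub)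
  qed
  with d1 have d2: "gcd r (card C) dvd card (wz r y)" unfolding r'_def by simp
  have "card (orbit G conj_act y) * card C = order G" unfolding C_def by (rule orbit_cent_card[OF y])
  hence "r dvd card (orbit G conj_act y) * card C" using r by simp
  thus ?thesis using dvd_gcd_trick d2 by blast
qed

end

context group begin

lemma conj_one_iff:
  assumes "g \<in> carrier G" "a \<in> carrier G"
  shows "g \<otimes> a \<otimes> inv g = \<one> \<longleftrightarrow> a = \<one>"
proof
  assume "g \<otimes> a \<otimes> inv g = \<one>"
  hence "inv g \<otimes> (g \<otimes> a \<otimes> inv g) \<otimes> inv (inv g) = inv g \<otimes> \<one> \<otimes> inv (inv g)" by simp
  thus "a = \<one>" using conj_back[OF assms] assms by simp
qed (use assms in simp)

lemma r_part:
  assumes fin: "finite (carrier G)" and p: "Factorial_Ring.prime p" and pr: "\<not> p dvd r"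
    and IH: "\<And>H m. subgroup H G \<Longrightarrow> card H < order G \<Longrightarrow> m dvd card H \<Longrightarrow> m dvd card (sols (G\<lparr>carrier := H\<rparr>) m)"
    and r: "r dvd order G"
  shows "\<exists>S. card (sols G (p^j * r)) =
     card {y \<in> carrier G. (\<forall>g\<in>carrier G. g \<otimes> y = y \<otimes> g) \<and> y [^] (p^j) = \<one>} * card (sols G r) + S
     \<and> r dvd S"
proof -
  define W where "W = {y \<in> carrier G. (\<forall>g\<in>carrier G. g \<otimes> y = y \<otimes> g) \<and> y [^] (p^j) = \<one>}"
  define T where "T = sols G (p^j) - W"
  have cop: "coprime (p^j) r" using p pr by (simp add: prime_imp_coprime)
  have pj: "p^j > 0" using p prime_gt_0_nat by simp
  have dec: "card (sols G (p^j * r)) = (\<Sum>y\<in>sols G (p^j). card (wz r y))"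
    using dec_card[OF fin cop pj] unfolding wz_def by simp
  have WS: "W \<subseteq> sols G (p^j)" unfolding W_def sols_def by auto
  have finS: "finite (sols G (p^j))" using fin unfolding sols_def by simp
  have split: "(\<Sum>y\<in>sols G (p^j). card (wz r y)) = (\<Sum>y\<in>T. card (wz r y)) + (\<Sum>y\<in>W. card (wz r y))"
    unfolding T_def using sum.subset_diff[OF WS finS] by simp
  have "\<And>y. y \<in> W \<Longrightarrow> wz r y = sols G r"
  proof -
    fix y assume y: "y \<in> W"
    have "\<And>z. z \<in> carrier G \<Longrightarrow> z \<otimes> y = y \<otimes> z" using y unfolding W_def by blast
    thus "wz r y = sols G r" unfolding wz_def sols_def by auto
  qed
  hence Wsum: "(\<Sum>y\<in>W. card (wz r y)) = card W * card (sols G r)" by simp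
  define F where "F = (\<lambda>y. if y \<in> T then card (wz r y) else 0)"
  have TC: "T \<subseteq> carrier G" unfolding T_def sols_def by auto
  have Fsum: "(\<Sum>y\<in>carrier G. F y) = (\<Sum>y\<in>T. card (wz r y))"
  proof -
    have e: "carrier G \<inter> T = T" using TC by blast
    show ?thesis
      unfolding F_def using sum.If_cases[OF fin, of "\<lambda>y. y \<in> T" "\<lambda>y. card (wz r y)" "\<lambda>_. 0"] e
      by simp
  qed
  have Tinv: "g \<otimes> y \<otimes> inv g \<in> T \<longleftrightarrow> y \<in> T" if g: "g \<in> carrier G" and y: "y \<in> carrier G" for g y
  proof -
    have yc: "g \<otimes> y \<otimes> inv g \<in> carrier G" using g y by simp
    have "(g \<otimes> y \<otimes> inv g) [^] (p^j) = \<one> \<longleftrightarrow> y [^] (p^j) = \<one>"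
      using conj_pow[OF g y] conj_one_iff[OF g] y by simp
    thus ?thesis unfolding T_def W_def sols_def using central_conj[OF g y] yc y by auto
  qed
  have "r dvd (\<Sum>y\<in>carrier G. F y)"
  proof (rule class_sum_dvd[OF fin])
    fix y g assume y: "y \<in> carrier G" and g: "g \<in> carrier G"
    show "F (g \<otimes> y \<otimes> inv g) = F y" unfolding F_def using Tinv[OF g y] wz_conj[OF fin g y] by simp
  next
    fix y assume y: "y \<in> carrier G"
    show "r dvd card (orbit G conj_act y) * F y"
    proof (cases "y \<in> T")
      case True
      hence "\<not> (\<forall>h\<in>carrier G. h \<otimes> y = y \<otimes> h)" unfolding T_def W_def sols_def by auto
      thus ?thesis using noncentral_dvd[OF fin y _ IH r] True unfolding F_def by simp
    next
      case False thus ?thesis unfolding F_def by simp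
    qed
  qed
  hence "r dvd (\<Sum>y\<in>T. card (wz r y))" using Fsum by simp
  thus ?thesis using dec split Wsum unfolding W_def by auto
qed

end

context group begin

lemma wz_gen_sub:
  assumes fin: "finite (carrier G)" and x: "x \<in> carrier G" and y: "y \<in> carrier G"
    and g: "generate G {x} = generate G {y}"
  shows "wz r y \<subseteq> wz r x"
proof
  fix z assume "z \<in> wz r y"
  hence z: "z \<in> carrier G" "z [^] r = \<one>" "y \<otimes> z = z \<otimes> y" unfolding wz_def by auto
  have "x \<in> generate G {y}" using g cyc_mem[OF x] by simp
  then obtain k where k: "x = y [^] (k::nat)" using cyc_elem[OF fin y] by blast
  have "y [^] k \<otimes> z = z \<otimes> y [^] k" using group_commutes_pow[OF z(3) y z(1)] .
  thus "z \<in> wz r x" using z k unfolding wz_def by simp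
qed

lemma wz_gen:
  assumes fin: "finite (carrier G)" and x: "x \<in> carrier G" and y: "y \<in> carrier G"
    and g: "generate G {x} = generate G {y}"
  shows "wz r x = wz r y"
  using wz_gen_sub[OF fin x y g] wz_gen_sub[OF fin y x g[symmetric]] by blast

lemma p_part:
  assumes fin: "finite (carrier G)" and p: "Factorial_Ring.prime p" and pr: "\<not> p dvd r"
  shows "\<exists>S. card (sols G (p ^ Suc e * r)) = card (sols G (p ^ e * r)) + S \<and> p ^ e dvd S"
proof -
  let ?cw = "\<lambda>y. card (wz r y)"
  have p0: "p > 0" using p prime_gt_0_nat by simp
  have cop0: "coprime (p^e) r" and cop1: "coprime (p^Suc e) r" using p pr by (simp_all add: prime_imp_coprime)
  have dec0: "card (sols G (p^e * r)) = (\<Sum>y\<in>sols G (p^e). ?cw y)"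
    using dec_card[OF fin cop0] p0 unfolding wz_def by simp
  have dec1: "card (sols G (p^Suc e * r)) = (\<Sum>y\<in>sols G (p^Suc e). ?cw y)"
    using dec_card[OF fin cop1] p0 unfolding wz_def by simp
  have sub: "sols G (p^e) \<subseteq> sols G (p^Suc e)"
    unfolding sols_def using pow_dvd_one by (auto simp: power_Suc)
  have finS: "finite (sols G (p^Suc e))" using fin unfolding sols_def by simp
  define D where "D = sols G (p^Suc e) - sols G (p^e)"
  have s1: "(\<Sum>y\<in>sols G (p^Suc e). ?cw y) = (\<Sum>y\<in>D. ?cw y) + (\<Sum>y\<in>sols G (p^e). ?cw y)"
    unfolding D_def using sum.subset_diff[OF sub finS] by simp
  have Dord: "y \<in> D \<longleftrightarrow> y \<in> carrier G \<and> ord y dvd p^Suc e \<and> \<not> ord y dvd p^e" for y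
    unfolding D_def sols_def using pow_eq_id by auto
  have finD: "finite D" unfolding D_def using finS by simp
  have "p^e dvd (\<Sum>y\<in>D. ?cw y)"
  proof -
    have "(\<Sum>y\<in>D. ?cw y) = (\<Sum>P\<in>(\<lambda>y. generate G {y}) ` D. \<Sum>y\<in>{x \<in> D. generate G {x} = P}. ?cw y)"
      by (rule sum.image_gen[OF finD])
    also have "p^e dvd \<dots>"
    proof (rule dvd_sum)
      fix P assume "P \<in> (\<lambda>y. generate G {y}) ` D"
      then obtain y0 where y0: "y0 \<in> D" "P = generate G {y0}" by auto
      have y0c: "y0 \<in> carrier G" using y0 Dord by auto
      have eqset: "{x \<in> D. generate G {x} = P} = {x \<in> carrier G. generate G {x} = generate G {y0}}"
      proof -
        have "x \<in> D" if "x \<in> carrier G" "generate G {x} = generate G {y0}" for x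
        proof -
          have "ord x = ord y0" using cyc_card[OF that(1)] cyc_card[OF y0c] that(2) by simp
          thus ?thesis using Dord y0(1) that(1) by simp
        qed
        thus ?thesis using y0(2) Dord by auto
      qed
      have "\<And>x. x \<in> {x \<in> carrier G. generate G {x} = generate G {y0}} \<Longrightarrow> ?cw x = ?cw y0"
        using wz_gen[OF fin _ y0c] by auto
      hence "(\<Sum>y\<in>{x \<in> D. generate G {x} = P}. ?cw y) = phi' (ord y0) * ?cw y0"
        unfolding eqset using gens_card[OF fin y0c] by simp
      moreover have "ord y0 = p ^ Suc e"
      proof -
        have "ord y0 dvd p ^ Suc e" "\<not> ord y0 dvd p ^ e" using y0 Dord by auto
        then obtain i where i: "i \<le> Suc e" "ord y0 = p ^ i" using divides_primepow_nat[OF p] by blast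
        have "\<not> i \<le> e" using i \<open>\<not> ord y0 dvd p ^ e\<close> by (auto simp: le_imp_power_dvd)
        hence "i = Suc e" using i by simp
        thus ?thesis using i by simp
      qed
      ultimately show "p^e dvd (\<Sum>y\<in>{x \<in> D. generate G {x} = P}. ?cw y)"
        using phi'_prime_power[OF p, of e] by simp
    qed
    finally show ?thesis .
  qed
  thus ?thesis using dec0 dec1 s1 by auto
qed

end

context group begin

lemma frob_step:
  assumes fin: "finite (carrier G)"
    and IH: "\<And>H m. subgroup H G \<Longrightarrow> card H < order G \<Longrightarrow> m dvd card H \<Longrightarrow> m dvd card (sols (G\<lparr>carrier := H\<rparr>) m)"
    and IHup: "\<And>m. m dvd order G \<Longrightarrow> n < m \<Longrightarrow> m dvd card (sols G m)"
    and n: "n dvd order G"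
  shows "n dvd card (sols G n)"
proof (cases "n = order G")
  case True
  have "sols G n = carrier G" unfolding sols_def True using pow_order_eq_1 by auto
  thus ?thesis using True by (simp add: order_def)
next
  case False
  have og: "order G > 0" using fin order_gt_0_iff_finite by blast
  have n0: "n > 0" using n og by (cases "n = 0") auto
  obtain q where oq: "order G = n * q" using n by auto
  have "q \<noteq> 1" using oq False by auto
  then obtain p where p: "Factorial_Ring.prime p" "p dvd q" using prime_factor_nat by blast
  have p1: "p > 1" using p prime_gt_1_nat by blast
  have pn: "p * n dvd order G" using oq p(2) by (auto simp: mult.commute mult_dvd_mono)
  have npn: "n < p * n" using p1 n0 by simp
  define e where "e = multiplicity p n"
  obtain r where nr: "n = p ^ e * r" and pr: "\<not> p dvd r"
    using multiplicity_decompose'[of n p] n0 p1 unfolding e_def by auto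
  have rG: "r dvd order G" using n nr by (metis dvd_mult_right dvd_trans)
  have pn_eq: "p * n = p ^ Suc e * r" using nr by simp
  define f where "f = (\<lambda>m. card (sols G m))"
  have d1: "p ^ Suc e * r dvd f (p ^ Suc e * r)" using IHup[OF pn npn] pn_eq unfolding f_def by simp
  obtain S1 where S1: "f (p ^ Suc e * r) =
     card {y \<in> carrier G. (\<forall>g\<in>carrier G. g \<otimes> y = y \<otimes> g) \<and> y [^] (p ^ Suc e) = \<one>} * f r + S1" "r dvd S1"
    using r_part[OF fin p(1) pr IH rG, of "Suc e"] unfolding f_def by blast
  have "r dvd p ^ Suc e * r" by simp
  hence "r dvd f (p ^ Suc e * r)" using d1 by (rule dvd_trans)
  hence "r dvd card {y \<in> carrier G. (\<forall>g\<in>carrier G. g \<otimes> y = y \<otimes> g) \<and> y [^] (p ^ Suc e) = \<one>} * f r"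
    using S1 by (simp add: dvd_add_left_iff)
  moreover have "coprime (card {y \<in> carrier G. (\<forall>g\<in>carrier G. g \<otimes> y = y \<otimes> g) \<and> y [^] (p ^ Suc e) = \<one>}) r"
    by (rule torsion_central_coprime[OF fin p(1) pr])
  ultimately have rf: "r dvd f r" using coprime_dvd_mult_right_iff[OF coprime_commute[THEN iffD1]] by blast
  obtain S0 where S0: "f (p ^ e * r) =
     card {y \<in> carrier G. (\<forall>g\<in>carrier G. g \<otimes> y = y \<otimes> g) \<and> y [^] (p ^ e) = \<one>} * f r + S0" "r dvd S0"
    using r_part[OF fin p(1) pr IH rG, of e] unfolding f_def by blast
  have r0: "r dvd f n" using S0 rf nr by simp
  obtain S where S: "f (p ^ Suc e * r) = f (p ^ e * r) + S" "p ^ e dvd S"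
    using p_part[OF fin p(1) pr, of e] unfolding f_def by blast
  have "p ^ e dvd p ^ Suc e * r" by simp
  hence "p ^ e dvd f (p ^ Suc e * r)" using d1 by (rule dvd_trans)
  hence pe: "p ^ e dvd f n" using S nr by (simp add: dvd_add_left_iff)
  have "coprime (p ^ e) r" using p(1) pr by (simp add: prime_imp_coprime)
  hence "p ^ e * r dvd f n" using pe r0 by (simp add: divides_mult)
  thus ?thesis using nr unfolding f_def by simp
qed

end

lemma frobenius_aux:
  "\<forall>G::('a,'b) monoid_scheme. group G \<longrightarrow> finite (carrier G) \<longrightarrow> order G = N \<longrightarrow>
     (\<forall>n. n dvd order G \<longrightarrow> n dvd card (sols G n))"
proof (induction N rule: less_induct)
  case (less N)
  show ?case
  proof (intro allI impI)
    fix G :: "('a,'b) monoid_scheme" and n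
    assume gG: "group G" and fin: "finite (carrier G)" and oN: "order G = N" and n: "n dvd order G"
    interpret group G by (rule gG)
    have IH: "m dvd card (sols (G\<lparr>carrier := H\<rparr>) m)"
      if H: "subgroup H G" "card H < order G" "m dvd card H" for H m
    proof -
      have "group (G\<lparr>carrier := H\<rparr>)" using subgroup.subgroup_is_group[OF H(1) gG] .
      moreover have "finite (carrier (G\<lparr>carrier := H\<rparr>))" using fin subgroup.subset[OF H(1)] finite_subset by auto
      moreover have "order (G\<lparr>carrier := H\<rparr>) < N" using H(2) oN by (simp add: order_def)
      ultimately show ?thesis using less.IH H(3) by (auto simp: order_def)
    qed
    have "\<forall>n. order G - n = k \<longrightarrow> n dvd order G \<longrightarrow> n dvd card (sols G n)" for k
    proof (induction k rule: less_induct)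
      case (less k)
      show ?case
      proof (intro allI impI)
        fix n assume k: "order G - n = k" and n: "n dvd order G"
        show "n dvd card (sols G n)"
        proof (rule frob_step[OF fin IH _ n])
          fix m assume m: "m dvd order G" "n < m"
          have "m \<le> order G" using m(1) fin order_gt_0_iff_finite dvd_imp_le by blast
          hence "order G - m < k" using k m(2) by linarith
          thus "m dvd card (sols G m)" using less.IH m(1) by blast
        qed auto
      qed
    qed
    thus "n dvd card (sols G n)" using n by blast
  qed
qed

theorem frobenius:
  assumes "group G" "finite (carrier G)" "n dvd order G"
  shows "n dvd card (sols G n)"
  using frobenius_aux assms by blast

lemma prime_dvd_prod_primes:
  assumes "finite A" "\<forall>a\<in>A. Factorial_Ring.prime (a::nat)" "Factorial_Ring.prime q" "q dvd \<Prod>A"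
  shows "q \<in> A"
proof -
  obtain a where a: "a \<in> A" "q dvd a" using prime_dvd_prod_iff[OF assms(1) assms(3)] assms(4) by auto
  have "q = a" using primes_dvd_imp_eq[OF assms(3) _ a(2)] assms(2) a(1) by blast
  thus ?thesis using a by simp
qed

lemma coprime_by_primes:
  fixes a b :: nat
  assumes "\<And>q. Factorial_Ring.prime q \<Longrightarrow> q dvd a \<Longrightarrow> q dvd b \<Longrightarrow> False"
  shows "coprime a b"
proof (rule ccontr)
  assume "\<not> coprime a b"
  hence "gcd a b \<noteq> 1" by (simp add: coprime_iff_gcd_eq_1)
  then obtain q where "Factorial_Ring.prime q" "q dvd gcd a b" using prime_factor_nat by blast
  thus False using assms by auto
qed

lemma lift_unit:
  fixes n k v :: nat
  assumes n: "n > 0" and k: "k dvd n" and v: "coprime v k"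
  shows "\<exists>w. coprime w n \<and> w mod k = v mod k \<and> w > 0"
proof -
  define A where "A = {p. Factorial_Ring.prime p \<and> p dvd n \<and> \<not> p dvd v}"
  have finA: "finite A" unfolding A_def using n by (auto intro: finite_subset[of _ "{..n}"] dest: dvd_imp_le)
  define t where "t = \<Prod>A"
  define w where "w = v + k * t"
  have "coprime w n"
  proof (rule coprime_by_primes)
    fix q assume q: "Factorial_Ring.prime q" "q dvd w" "q dvd n"
    show False
    proof (cases "q dvd v")
      case True
      hence "q dvd k * t" using q(2) unfolding w_def by (simp add: dvd_add_right_iff)
      hence "q dvd k \<or> q dvd t" using q(1) by (simp add: prime_dvd_mult_iff)
      thus False
      proof
        assume "q dvd k"
        hence "is_unit q" using coprime_common_divisor[OF v True] by simp
        thus False using q(1) by (simp add: not_prime_unit)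
      next
        assume "q dvd t"
        hence "q \<in> A" using prime_dvd_prod_primes[OF finA _ q(1)] unfolding t_def A_def by blast
        thus False using True unfolding A_def by simp
      qed
    next
      case False
      hence "q \<in> A" using q unfolding A_def by simp
      hence "q dvd t" unfolding t_def using dvd_prodI[OF finA, of q id] by simp
      hence "q dvd k * t" by simp
      hence "q dvd v" using q(2) unfolding w_def by (simp add: dvd_add_left_iff)
      thus False using False by simp
    qed
  qed
  moreover have "w mod k = v mod k" unfolding w_def by simp
  moreover have "w > 0"
  proof -
    have "k > 0" using k n by (auto intro: Nat.gr0I)
    moreover have "t > 0" unfolding t_def using finA by (auto simp: A_def prime_gt_0_nat intro: prod_pos)
    ultimately show ?thesis unfolding w_def by simp
  qed
  ultimately show ?thesis by blast
qed

definition rep :: "nat \<Rightarrow> nat \<Rightarrow> nat" where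
  "rep n x = (if x mod n = 0 then n else x mod n)"

definition tot :: "nat \<Rightarrow> nat set" where
  "tot n = {u. 1 \<le> u \<and> u \<le> n \<and> coprime u n}"

lemma card_tot: "card (tot n) = phi' n"
  unfolding tot_def phi'_def by simp

lemma finite_tot [simp]: "finite (tot n)"
  unfolding tot_def by (rule finite_subset[of _ "{..n}"]) auto

lemma rep_mod: "n > 0 \<Longrightarrow> rep n x mod n = x mod n"
  unfolding rep_def by auto

lemma rep_bounds: "n > 0 \<Longrightarrow> 1 \<le> rep n x \<and> rep n x \<le> n"
  unfolding rep_def by (auto simp: less_imp_le)

lemma rep_id: "1 \<le> u \<Longrightarrow> u \<le> n \<Longrightarrow> rep n u = u"
  unfolding rep_def by (cases "u = n") auto

lemma coprime_mod_iff: "(n::nat) > 0 \<Longrightarrow> a mod n = b mod n \<Longrightarrow> coprime a n \<longleftrightarrow> coprime b n"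
  using coprime_mod_left_iff[of n a] coprime_mod_left_iff[of n b] by simp

lemma rep_tot: "n > 0 \<Longrightarrow> coprime x n \<Longrightarrow> rep n x \<in> tot n"
  unfolding tot_def using rep_bounds coprime_mod_iff rep_mod by blast

lemma mod_eq_from_mod_dvd:
  fixes a b n k :: nat
  assumes "a mod n = b mod n" "k dvd n"
  shows "a mod k = b mod k"
  using assms by (metis mod_mod_cancel)

lemma mod_cancel_coprime:
  fixes u u' c n :: nat
  assumes c: "coprime c n" and eq: "(u * c) mod n = (u' * c) mod n"
  shows "u mod n = u' mod n"
proof (cases "n \<le> 1")
  case True
  show ?thesis
  proof (cases "n = 0")
    case True thus ?thesis using c eq by simp
  next
    case False hence "n = 1" using \<open>n \<le> 1\<close> by simp
    thus ?thesis by simp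
  qed
next
  case False
  have "c \<noteq> 0"
  proof
    assume "c = 0"
    hence "n = 1" using c by simp
    thus False using False by simp
  qed
  then obtain x y where xy: "c * x = n * y + 1" using bezout_nat[of c n] c by (auto simp: coprime_iff_gcd_eq_1)
  have cx: "(c * x) mod n = 1 mod n"
  proof -
    have "(c * x) mod n = (1 + y * n) mod n" using xy by (simp add: algebra_simps)
    thus ?thesis by (simp only: mod_mult_self1)
  qed
  have "u mod n = (u * (c * x)) mod n" using cx by (metis mod_mult_right_eq mult.right_neutral)
  also have "\<dots> = ((u * c) * x) mod n" by (simp add: mult.assoc)
  also have "\<dots> = ((u' * c) * x) mod n" using eq by (metis mod_mult_left_eq)
  also have "\<dots> = (u' * (c * x)) mod n" by (simp add: mult.assoc)
  also have "\<dots> = u' mod n" using cx by (metis mod_mult_right_eq mult.right_neutral)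
  finally show ?thesis .
qed

lemma fib_card:
  fixes n k :: nat
  assumes n: "n > 0" and k: "k dvd n"
  shows "card {u \<in> tot n. u mod k = 1 mod k} * phi' k = phi' n"
proof -
  have k0: "k > 0" using k n by (auto intro: Nat.gr0I)
  define A where "A = (\<lambda>v. {u \<in> tot n. u mod k = v mod k})"
  have finA: "\<And>v. finite (A v)" unfolding A_def by simp
  have eqc: "card (A v) = card (A 1)" if v: "coprime v k" for v
  proof -
    obtain w where w: "coprime w n" "w mod k = v mod k" "w > 0" using lift_unit[OF n k v] by blast
    obtain x y where xy: "w * x = n * y + 1"
      using bezout_nat[of w n] w by (auto simp: coprime_iff_gcd_eq_1)
    have "(w * x) mod n = (1 + y * n) mod n" using xy by (simp add: algebra_simps)
    hence wx: "(w * x) mod n = 1 mod n" by (simp only: mod_mult_self1)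
    have cx: "coprime x n"
    proof (rule coprime_by_primes)
      fix q assume q: "Factorial_Ring.prime q" "q dvd x" "q dvd n"
      have "q dvd w * x" using q(2) by simp
      hence "q dvd n * y + 1" using xy by simp
      moreover have "q dvd n * y" using q(3) by simp
      ultimately have "q dvd 1" using dvd_add_right_iff by blast
      thus False using q(1) by simp
    qed
    have wxk: "(w * x) mod k = 1 mod k" using mod_eq_from_mod_dvd[OF wx k] .
    have inj_gen: "inj_on (\<lambda>u. rep n (u * c)) (tot n)" if c: "coprime c n" for c
    proof (rule inj_onI)
      fix u u' assume u: "u \<in> tot n" "u' \<in> tot n" and eq: "rep n (u * c) = rep n (u' * c)"
      have "(u * c) mod n = (u' * c) mod n" using rep_mod[OF n, of "u * c"] rep_mod[OF n, of "u' * c"] eq by simp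
      hence "u mod n = u' mod n" using mod_cancel_coprime[OF c] by blast
      hence "rep n u = rep n u'" unfolding rep_def by simp
      thus "u = u'" using u unfolding tot_def by (simp add: rep_id)
    qed
    have ucop: "coprime (u * c) n" if "u \<in> tot n" "coprime c n" for u c
      using that unfolding tot_def by simp
    have modk: "rep n z mod k = z mod k" for z using mod_eq_from_mod_dvd[OF rep_mod[OF n] k] .
    have m1: "(\<lambda>u. rep n (u * w)) ` A 1 \<subseteq> A v"
    proof clarify
      fix u assume u: "u \<in> A 1"
      have "rep n (u * w) \<in> tot n" using rep_tot[OF n ucop[OF _ w(1)]] u unfolding A_def by simp
      moreover have "rep n (u * w) mod k = v mod k"
      proof -
        have "rep n (u * w) mod k = ((u mod k) * (w mod k)) mod k" using modk by (simp add: mod_mult_eq)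
        also have "\<dots> = ((1 mod k) * (v mod k)) mod k" using u w(2) unfolding A_def by simp
        also have "\<dots> = v mod k" by (simp add: mod_mult_eq)
        finally show ?thesis .
      qed
      ultimately show "rep n (u * w) \<in> A v" unfolding A_def by simp
    qed
    have m2: "(\<lambda>u. rep n (u * x)) ` A v \<subseteq> A 1"
    proof clarify
      fix u assume u: "u \<in> A v"
      have "rep n (u * x) \<in> tot n" using rep_tot[OF n ucop[OF _ cx]] u unfolding A_def by simp
      moreover have "rep n (u * x) mod k = 1 mod k"
      proof -
        have "rep n (u * x) mod k = ((u mod k) * (x mod k)) mod k" using modk by (simp add: mod_mult_eq)
        also have "\<dots> = ((w mod k) * (x mod k)) mod k" using u w(2) unfolding A_def by simp
        also have "\<dots> = (w * x) mod k" by (simp add: mod_mult_eq)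
        finally show ?thesis using wxk by simp
      qed
      ultimately show "rep n (u * x) \<in> A 1" unfolding A_def by simp
    qed
    have s1: "A 1 \<subseteq> tot n" "A v \<subseteq> tot n" unfolding A_def by auto
    have i1: "inj_on (\<lambda>u. rep n (u * w)) (A 1)" by (rule inj_on_subset[OF inj_gen[OF w(1)] s1(1)])
    have i2: "inj_on (\<lambda>u. rep n (u * x)) (A v)" by (rule inj_on_subset[OF inj_gen[OF cx] s1(2)])
    show ?thesis using card_inj_on_le[OF i1 m1 finA] card_inj_on_le[OF i2 m2 finA] by simp
  qed
  have cover: "tot n = (\<Union>v\<in>tot k. A v)"
  proof
    show "tot n \<subseteq> (\<Union>v\<in>tot k. A v)"
    proof
      fix u assume u: "u \<in> tot n"
      have "coprime u n" using u unfolding tot_def by simp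
      hence "coprime u k" using coprime_divisors[OF dvd_refl k] by blast
      hence "rep k u \<in> tot k" using rep_tot[OF k0] by simp
      moreover have "u \<in> A (rep k u)" using u rep_mod[OF k0] unfolding A_def by simp
      ultimately show "u \<in> (\<Union>v\<in>tot k. A v)" by blast
    qed
  qed (auto simp: A_def)
  have disj: "\<forall>v\<in>tot k. \<forall>v'\<in>tot k. v \<noteq> v' \<longrightarrow> A v \<inter> A v' = {}"
  proof (intro ballI impI)
    fix v v' assume v: "v \<in> tot k" "v' \<in> tot k" "v \<noteq> v'"
    have "v mod k \<noteq> v' mod k"
    proof
      assume "v mod k = v' mod k"
      hence "rep k v = rep k v'" unfolding rep_def by simp
      thus False using v unfolding tot_def by (simp add: rep_id)
    qed
    thus "A v \<inter> A v' = {}" unfolding A_def by auto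
  qed
  have "phi' n = card (tot n)" by (simp add: card_tot)
  also have "\<dots> = (\<Sum>v\<in>tot k. card (A v))" unfolding cover using card_UN_disjoint[OF finite_tot _ disj] finA by simp
  also have "\<dots> = (\<Sum>v\<in>tot k. card (A 1))"
  proof (rule sum.cong[OF refl])
    fix v assume "v \<in> tot k"
    hence "coprime v k" unfolding tot_def by simp
    thus "card (A v) = card (A 1)" by (rule eqc)
  qed
  also have "\<dots> = phi' k * card (A 1)" by (simp add: card_tot)
  finally show ?thesis unfolding A_def by simp
qed

lemma tot_dvd_iff:
  assumes "u \<in> tot n"
  shows "k dvd (u - 1) \<longleftrightarrow> u mod k = 1 mod k"
  using assms mod_eq_dvd_iff_nat[of 1 u k] unfolding tot_def by auto

lemma sum_if_const: "finite S \<Longrightarrow> (\<Sum>u\<in>S. if P u then (c::nat) else 0) = card {u\<in>S. P u} * c"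
proof -
  assume f: "finite S"
  have "{u\<in>S. P u} = S \<inter> Collect P" by blast
  thus ?thesis using f by (simp add: sum.If_cases)
qed

lemma swap_lemma:
  fixes n :: nat and \<kappa> :: "'b \<Rightarrow> nat"
  assumes n: "n > 0" and finI: "finite I" and dv: "\<And>i. i \<in> I \<Longrightarrow> \<kappa> i dvd n"
  shows "(\<Sum>u\<in>tot n. \<Sum>i\<in>I. if \<kappa> i dvd (u - 1) then phi' (\<kappa> i) else 0) = card I * phi' n"
proof -
  have "(\<Sum>u\<in>tot n. \<Sum>i\<in>I. if \<kappa> i dvd (u - 1) then phi' (\<kappa> i) else 0)
      = (\<Sum>i\<in>I. \<Sum>u\<in>tot n. if \<kappa> i dvd (u - 1) then phi' (\<kappa> i) else 0)"
    by (rule sum.swap)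
  also have "\<dots> = (\<Sum>i\<in>I. phi' n)"
  proof (rule sum.cong[OF refl])
    fix i assume i: "i \<in> I"
    have "(\<Sum>u\<in>tot n. if \<kappa> i dvd (u - 1) then phi' (\<kappa> i) else 0)
        = card {u \<in> tot n. \<kappa> i dvd (u - 1)} * phi' (\<kappa> i)" by (rule sum_if_const) simp
    also have "{u \<in> tot n. \<kappa> i dvd (u - 1)} = {u \<in> tot n. u mod \<kappa> i = 1 mod \<kappa> i}"
      using tot_dvd_iff by blast
    also have "card \<dots> * phi' (\<kappa> i) = phi' n" by (rule fib_card[OF n dv[OF i]])
    finally show "(\<Sum>u\<in>tot n. if \<kappa> i dvd (u - 1) then phi' (\<kappa> i) else 0) = phi' n" .
  qed
  also have "\<dots> = card I * phi' n" by simp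
  finally show ?thesis .
qed

lemma divisors_finite: "(n::nat) > 0 \<Longrightarrow> finite {d. d dvd n}"
  by simp

lemma gcd_as_sum:
  fixes n a :: nat
  assumes n: "n > 0"
  shows "gcd a n = (\<Sum>d\<in>{d. d dvd n}. if d dvd a then phi' d else 0)"
proof -
  have g0: "gcd a n > 0" using n by simp
  have "gcd a n = (\<Sum>d | d dvd gcd a n. phi' d)" using sum_phi'_factors[OF g0] by simp
  also have "{d. d dvd gcd a n} = {d \<in> {d. d dvd n}. d dvd a}" by auto
  also have "(\<Sum>d\<in>{d \<in> {d. d dvd n}. d dvd a}. phi' d) = (\<Sum>d\<in>{d. d dvd n}. if d dvd a then phi' d else 0)"
    by (rule sum.inter_filter) (use n in simp)
  finally show ?thesis .
qed

lemma num_divisors_alt: "(n::nat) > 0 \<Longrightarrow> num_divisors n = card {d. d dvd n}"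
  unfolding num_divisors_def by (rule arg_cong[where f=card]) (auto intro: Nat.gr0I)

lemma gcd_sum_tot:
  fixes n :: nat
  assumes n: "n > 0"
  shows "(\<Sum>u\<in>tot n. gcd (u - 1) n) = num_divisors n * phi' n"
proof -
  have "(\<Sum>u\<in>tot n. gcd (u - 1) n) = (\<Sum>u\<in>tot n. \<Sum>d\<in>{d. d dvd n}. if d dvd (u - 1) then phi' d else 0)"
    using gcd_as_sum[OF n] by simp
  also have "\<dots> = card {d. d dvd n} * phi' n"
    using swap_lemma[OF n divisors_finite[OF n], of "\<lambda>d. d"] by simp
  finally show ?thesis using num_divisors_alt[OF n] by simp
qed

lemma mod_diff1:
  fixes a b n :: nat
  assumes "a \<ge> 1" "b \<ge> 1" "a mod n = b mod n"
  shows "(a - 1) mod n = (b - 1) mod n"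
proof (cases "a \<ge> b")
  case True
  hence "n dvd a - b" using assms(3) mod_eq_dvd_iff_nat by blast
  moreover have "(a - 1) - (b - 1) = a - b" using assms by simp
  ultimately show ?thesis using mod_eq_dvd_iff_nat[of "b - 1" "a - 1" n] True by simp
next
  case False
  hence "n dvd b - a" using assms(3)[symmetric] mod_eq_dvd_iff_nat by simp
  moreover have "(b - 1) - (a - 1) = b - a" using assms by simp
  ultimately show ?thesis using mod_eq_dvd_iff_nat[of "a - 1" "b - 1" n] False by simp
qed

lemma prime_dvd_2: "Factorial_Ring.prime (p::nat) \<Longrightarrow> p dvd 2 \<Longrightarrow> p = 2"
  using primes_dvd_imp_eq two_is_prime_nat by blast

lemma gcd_achieved:
  fixes n m :: nat
  assumes n: "n > 0" and mn: "m dvd n" and par: "odd n \<or> even m"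
  shows "\<exists>u\<in>tot n. gcd (u - 1) n = m"
proof -
  have m0: "m > 0" using mn n by (auto intro: Nat.gr0I)
  obtain q where nq: "n = m * q" using mn by auto
  define A where "A = {p. Factorial_Ring.prime p \<and> p dvd n \<and> \<not> p dvd m \<and> p dvd (m + 1)}"
  define B where "B = {p. Factorial_Ring.prime p \<and> p dvd n} - A"
  have finP: "finite {p. Factorial_Ring.prime p \<and> p dvd n}"
    using n by (auto intro: finite_subset[of _ "{..n}"] dest: dvd_imp_le)
  have finA: "finite A" unfolding A_def by (rule finite_subset[OF _ finP]) auto
  have finB: "finite B" unfolding B_def using finP by simp
  have primA: "\<forall>a\<in>A. Factorial_Ring.prime a" and primB: "\<forall>a\<in>B. Factorial_Ring.prime a"
    unfolding A_def B_def by auto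
  define PA where "PA = \<Prod>A"
  define PB where "PB = \<Prod>B"
  have dA: "p dvd PA" if "p \<in> A" for p unfolding PA_def using dvd_prodI[OF finA that, of id] by simp
  have dB: "p dvd PB" if "p \<in> B" for p unfolding PB_def using dvd_prodI[OF finB that, of id] by simp
  have PB0: "PB \<noteq> 0" unfolding PB_def using finB primB by (auto simp: prime_gt_0_nat)
  have cop: "coprime PB PA"
  proof (rule coprime_by_primes)
    fix r assume r: "Factorial_Ring.prime r" "r dvd PB" "r dvd PA"
    have "r \<in> B" using prime_dvd_prod_primes[OF finB primB r(1)] r(2) unfolding PB_def by simp
    moreover have "r \<in> A" using prime_dvd_prod_primes[OF finA primA r(1)] r(3) unfolding PA_def by simp
    ultimately show False unfolding B_def by simp
  qed
  obtain x y where xy: "PB * x = PA * y + 1"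
    using bezout_nat[OF PB0, of PA] cop by (auto simp: coprime_iff_gcd_eq_1)
  define w where "w = 1 + PB * x"
  have w2: "w = 2 + PA * y" unfolding w_def using xy by simp
  define U where "U = 1 + m * w"
  have cw: "coprime w q"
  proof (rule coprime_by_primes)
    fix p assume p: "Factorial_Ring.prime p" "p dvd w" "p dvd q"
    have pn: "p dvd n" using p(3) nq by simp
    show False
    proof (cases "p \<in> A")
      case True
      hence "p dvd PA * y" using dA by simp
      moreover have "p dvd 2 + PA * y" using p(2) w2 by simp
      ultimately have "p dvd 2" using dvd_add_left_iff by blast
      hence "p = 2" using prime_dvd_2 p(1) by blast
      hence "\<not> 2 dvd m" "2 dvd n" using True unfolding A_def by auto
      thus False using par by simp
    next
      case False
      hence "p \<in> B" using p(1) pn unfolding B_def by simp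
      hence "p dvd PB * x" using dB by simp
      moreover have "p dvd 1 + PB * x" using p(2) unfolding w_def .
      ultimately have "p dvd 1" using dvd_add_left_iff by blast
      thus False using p(1) by simp
    qed
  qed
  have cU: "coprime U n"
  proof (rule coprime_by_primes)
    fix p assume p: "Factorial_Ring.prime p" "p dvd U" "p dvd n"
    show False
    proof (cases "p dvd m")
      case True
      hence "p dvd m * w" by simp
      moreover have "p dvd 1 + m * w" using p(2) unfolding U_def .
      ultimately have "p dvd 1" using dvd_add_left_iff by blast
      thus False using p(1) by simp
    next
      case pm: False
      show False
      proof (cases "p \<in> A")
        case True
        have "U = (1 + 2 * m) + m * PA * y" unfolding U_def w2 by (simp add: algebra_simps)
        moreover have "p dvd m * PA * y" using dA[OF True] by simp
        ultimately have "p dvd 1 + 2 * m" using p(2) dvd_add_left_iff by metis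
        moreover have "p dvd 2 * (m + 1)" using True unfolding A_def by (simp only: mem_Collect_eq dvd_mult)
        moreover have "2 * (m + 1) = (1 + 2 * m) + 1" by simp
        ultimately have "p dvd 1" by (metis dvd_add_right_iff)
        thus False using p(1) by simp
      next
        case False
        hence pB: "p \<in> B" using p(1) p(3) unfolding B_def by simp
        hence "\<not> p dvd m + 1" using False p pm unfolding A_def B_def by simp
        moreover have "U = (m + 1) + m * PB * x" unfolding U_def w_def by (simp add: algebra_simps)
        moreover have "p dvd m * PB * x" using dB[OF pB] by simp
        ultimately show False using p(2) dvd_add_left_iff by metis
      qed
    qed
  qed
  define u where "u = rep n U"
  have ut: "u \<in> tot n" unfolding u_def by (rule rep_tot[OF n cU])
  have u1: "u \<ge> 1" using ut unfolding tot_def by simp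
  have umod: "u mod n = U mod n" unfolding u_def by (rule rep_mod[OF n])
  have U1: "U \<ge> 1" unfolding U_def by simp
  have "(u - 1) mod n = (U - 1) mod n" by (rule mod_diff1[OF u1 U1 umod])
  hence "(u - 1) mod n = (m * w) mod n" unfolding U_def by simp
  hence "gcd (u - 1) n = gcd (m * w) n" by (metis gcd_mod_left n not_gr0)
  also have "\<dots> = m * gcd w q" unfolding nq by (simp add: gcd_mult_distrib_nat)
  also have "\<dots> = m" using cw by (simp add: coprime_iff_gcd_eq_1)
  finally show ?thesis using ut by blast
qed

context group begin

lemma gen_sols_image:
  assumes fin: "finite (carrier G)"
  shows "(\<lambda>x. generate G {x}) ` sols G m = {H. cyclic_subgroup G H \<and> card H dvd m}"
proof
  show "(\<lambda>x. generate G {x}) ` sols G m \<subseteq> {H. cyclic_subgroup G H \<and> card H dvd m}"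
  proof clarify
    fix x assume "x \<in> sols G m"
    hence x: "x \<in> carrier G" "x [^] m = \<one>" unfolding sols_def by auto
    have "card (generate G {x}) dvd m" using cyc_card[OF x(1)] x pow_eq_id by simp
    thus "cyclic_subgroup G (generate G {x}) \<and> card (generate G {x}) dvd m"
      unfolding cyclic_subgroup_def using x(1) by blast
  qed
next
  show "{H. cyclic_subgroup G H \<and> card H dvd m} \<subseteq> (\<lambda>x. generate G {x}) ` sols G m"
  proof clarify
    fix H assume H: "cyclic_subgroup G H" "card H dvd m"
    then obtain g where g: "g \<in> carrier G" "H = generate G {g}" unfolding cyclic_subgroup_def by blast
    have "g [^] m = \<one>" using H(2) g cyc_card[OF g(1)] pow_eq_id by simp
    hence "g \<in> sols G m" using g unfolding sols_def by simp
    thus "H \<in> (\<lambda>x. generate G {x}) ` sols G m" using g by blast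
  qed
qed

lemma cycs_finite:
  assumes fin: "finite (carrier G)"
  shows "finite {H. cyclic_subgroup G H \<and> P H}"
proof (rule finite_subset[of _ "Pow (carrier G)"])
  show "{H. cyclic_subgroup G H \<and> P H} \<subseteq> Pow (carrier G)"
    unfolding cyclic_subgroup_def using cyc_sub_carrier by auto
qed (use fin in simp)

lemma card_sols_cycs:
  assumes fin: "finite (carrier G)"
  shows "card (sols G m) = (\<Sum>H\<in>{H. cyclic_subgroup G H \<and> card H dvd m}. phi' (card H))"
proof -
  have finS: "finite (sols G m)" using fin unfolding sols_def by simp
  have "card (sols G m) = (\<Sum>x\<in>sols G m. 1)" by simp
  also have "\<dots> = (\<Sum>H\<in>(\<lambda>x. generate G {x}) ` sols G m. \<Sum>x\<in>{x \<in> sols G m. generate G {x} = H}. 1)"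
    by (rule sum.image_gen[OF finS])
  also have "\<dots> = (\<Sum>H\<in>(\<lambda>x. generate G {x}) ` sols G m. phi' (card H))"
  proof (rule sum.cong[OF refl])
    fix H assume "H \<in> (\<lambda>x. generate G {x}) ` sols G m"
    then obtain x0 where x0: "x0 \<in> sols G m" "H = generate G {x0}" by auto
    have x0c: "x0 \<in> carrier G" and x0m: "x0 [^] m = \<one>" using x0 unfolding sols_def by auto
    have "{x \<in> sols G m. generate G {x} = H} = {x \<in> carrier G. generate G {x} = generate G {x0}}"
    proof -
      have "x [^] m = \<one>" if "x \<in> carrier G" "generate G {x} = generate G {x0}" for x
      proof -
        have "ord x = ord x0" using cyc_card[OF that(1)] cyc_card[OF x0c] that(2) by simp
        thus ?thesis using x0m pow_eq_id x0c that(1) by simp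
      qed
      thus ?thesis using x0(2) unfolding sols_def by auto
    qed
    hence "(\<Sum>x\<in>{x \<in> sols G m. generate G {x} = H}. 1) = phi' (ord x0)"
      using gens_card[OF fin x0c] by simp
    thus "(\<Sum>x\<in>{x \<in> sols G m. generate G {x} = H}. 1) = phi' (card H)"
      using x0(2) cyc_card[OF x0c] by simp
  qed
  finally show ?thesis unfolding gen_sols_image[OF fin] .
qed

lemma sum_sols_gcd:
  assumes fin: "finite (carrier G)" and n: "n > 0"
  shows "(\<Sum>u\<in>tot n. card (sols G (gcd (u - 1) n))) = card {H. cyclic_subgroup G H \<and> card H dvd n} * phi' n"
proof -
  let ?C = "{H. cyclic_subgroup G H \<and> card H dvd n}"
  have "\<And>u. card (sols G (gcd (u - 1) n)) = (\<Sum>H\<in>?C. if card H dvd (u - 1) then phi' (card H) else 0)"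
  proof -
    fix u
    have "card (sols G (gcd (u - 1) n)) = (\<Sum>H\<in>{H. cyclic_subgroup G H \<and> card H dvd gcd (u - 1) n}. phi' (card H))"
      by (rule card_sols_cycs[OF fin])
    also have "{H. cyclic_subgroup G H \<and> card H dvd gcd (u - 1) n} = {H \<in> ?C. card H dvd (u - 1)}"
      by auto
    also have "(\<Sum>H\<in>{H \<in> ?C. card H dvd (u - 1)}. phi' (card H)) = (\<Sum>H\<in>?C. if card H dvd (u - 1) then phi' (card H) else 0)"
      by (rule sum.inter_filter[OF cycs_finite[OF fin]])
    finally show "card (sols G (gcd (u - 1) n)) = (\<Sum>H\<in>?C. if card H dvd (u - 1) then phi' (card H) else 0)" .
  qed
  hence "(\<Sum>u\<in>tot n. card (sols G (gcd (u - 1) n))) = (\<Sum>u\<in>tot n. \<Sum>H\<in>?C. if card H dvd (u - 1) then phi' (card H) else 0)"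
    by simp
  also have "\<dots> = card ?C * phi' n"
    by (rule swap_lemma[OF n cycs_finite[OF fin]]) simp
  finally show ?thesis .
qed

end

context group begin

lemma sols_ge:
  assumes fin: "finite (carrier G)" and g: "g dvd order G" "g > 0"
  shows "g \<le> card (sols G g)"
proof -
  have d: "g dvd card (sols G g)" by (rule frobenius[OF is_group fin g(1)])
  have "\<one> \<in> sols G g" unfolding sols_def by simp
  moreover have "finite (sols G g)" using fin unfolding sols_def by simp
  ultimately have "card (sols G g) > 0" by (auto simp: card_gt_0_iff)
  thus ?thesis using d by (simp add: dvd_imp_le)
qed

lemma sols_as_ord_sum:
  assumes fin: "finite (carrier G)" and m: "m > 0"
  shows "card (sols G m) = (\<Sum>j\<in>{j. j dvd m}. card {x \<in> carrier G. ord x = j})"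
proof -
  have finS: "finite (sols G m)" using fin unfolding sols_def by simp
  have img: "ord ` sols G m \<subseteq> {j. j dvd m}" unfolding sols_def using pow_eq_id by auto
  have "(\<Sum>j\<in>{j. j dvd m}. \<Sum>x\<in>{x. x \<in> sols G m \<and> ord x = j}. (1::nat)) = (\<Sum>x\<in>sols G m. 1)"
    by (rule sum.group[OF finS _ img]) (use m in simp)
  moreover have "{x. x \<in> sols G m \<and> ord x = j} = {x \<in> carrier G. ord x = j}" if "j dvd m" for j
    unfolding sols_def using pow_eq_id that by auto
  ultimately show ?thesis by simp
qed

lemma ord_count:
  assumes fin: "finite (carrier G)" and n: "n > 0"
    and H1: "\<forall>m. 0 < m \<and> m dvd n \<longrightarrow> card (sols G m) = m"
  shows "k dvd n \<Longrightarrow> card {x \<in> carrier G. ord x = k} = phi' k"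
proof (induction k rule: less_induct)
  case (less k)
  have k0: "k > 0" using less.prems n by (auto intro: Nat.gr0I)
  let ?e = "\<lambda>j. card {x \<in> carrier G. ord x = j}"
  have D: "{j. j dvd k} = insert k ({j. j dvd k} - {k})" by auto
  have finD: "finite ({j. j dvd k} - {k})" using k0 by simp
  have IH: "\<And>j. j \<in> {j. j dvd k} - {k} \<Longrightarrow> ?e j = phi' j"
  proof -
    fix j assume j: "j \<in> {j. j dvd k} - {k}"
    hence "j < k" using k0 by (auto dest: dvd_imp_le)
    moreover have "j dvd n" using j less.prems dvd_trans by auto
    ultimately show "?e j = phi' j" using less.IH by blast
  qed
  have "k = card (sols G k)" using H1 k0 less.prems by simp
  also have "\<dots> = (\<Sum>j\<in>{j. j dvd k}. ?e j)" by (rule sols_as_ord_sum[OF fin k0])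
  also have "\<dots> = ?e k + (\<Sum>j\<in>{j. j dvd k} - {k}. ?e j)" by (subst D, rule sum.insert[OF finD]) simp
  also have "(\<Sum>j\<in>{j. j dvd k} - {k}. ?e j) = (\<Sum>j\<in>{j. j dvd k} - {k}. phi' j)" using IH by simp
  finally have e1: "k = ?e k + (\<Sum>j\<in>{j. j dvd k} - {k}. phi' j)" .
  have "k = (\<Sum>j | j dvd k. phi' j)" using sum_phi'_factors[OF k0] by simp
  also have "\<dots> = phi' k + (\<Sum>j\<in>{j. j dvd k} - {k}. phi' j)" by (subst D, rule sum.insert[OF finD]) simp
  finally show ?case using e1 by simp
qed

end

context group begin

lemma gen_of_subgroup: "subgroup H G \<Longrightarrow> generate G H = H"
  using generate_subgroup_incl[of H H] generate.incl[of _ H G] by blast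

lemma one_imp_three:
  assumes fin: "finite (carrier G)" and n: "n > 0"
    and H1: "\<forall>m. 0 < m \<and> m dvd n \<longrightarrow> card (sols G m) = m"
  shows "cyclic_subgroup G (generate G (\<Union>{H. cyclic_subgroup G H \<and> card H dvd n}))
       \<and> card (generate G (\<Union>{H. cyclic_subgroup G H \<and> card H dvd n})) = n"
proof -
  have "card {x \<in> carrier G. ord x = n} = phi' n" using ord_count[OF fin n H1] by simp
  hence "card {x \<in> carrier G. ord x = n} > 0" using phi'_nonzero[OF n] by simp
  then obtain g where g: "g \<in> carrier G" "ord g = n" by (metis (mono_tags, lifting) card_gt_0_iff mem_Collect_eq ex_in_conv)
  define K where "K = generate G {g}"
  have cK: "card K = n" unfolding K_def using cyc_card[OF g(1)] g(2) by simp
  have Ksub: "K \<subseteq> sols G n"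
  proof
    fix x assume "x \<in> K"
    then obtain k where k: "x = g [^] (k::nat)" unfolding K_def using cyc_elem[OF fin g(1)] by blast
    have "x [^] n = (g [^] n) [^] k" using k g(1) by (simp add: nat_pow_pow mult.commute)
    also have "\<dots> = \<one>" using g pow_ord_eq_1 by (metis nat_pow_one)
    finally show "x \<in> sols G n" unfolding sols_def using k g(1) by simp
  qed
  have finS: "finite (sols G n)" using fin unfolding sols_def by simp
  have KS: "K = sols G n" using card_subset_eq[OF finS Ksub] cK H1 n by simp
  have U: "\<Union>{H. cyclic_subgroup G H \<and> card H dvd n} = K"
  proof
    show "\<Union>{H. cyclic_subgroup G H \<and> card H dvd n} \<subseteq> K"
    proof clarify
      fix x H assume H: "cyclic_subgroup G H" "card H dvd n" and x: "x \<in> H"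
      obtain h where h: "h \<in> carrier G" "H = generate G {h}" using H(1) unfolding cyclic_subgroup_def by blast
      have "h [^] n = \<one>" using H(2) h cyc_card[OF h(1)] pow_eq_id by simp
      hence "h \<in> K" using KS h unfolding sols_def by simp
      hence "H \<subseteq> K" using h cyc_sub[OF g(1)] unfolding K_def by simp
      thus "x \<in> K" using x by blast
    qed
  next
    have "cyclic_subgroup G K" unfolding cyclic_subgroup_def K_def using g(1) by blast
    hence "K \<in> {H. cyclic_subgroup G H \<and> card H dvd n}" using cK by simp
    thus "K \<subseteq> \<Union>{H. cyclic_subgroup G H \<and> card H dvd n}" by (rule Union_upper)
  qed
  have "generate G K = K" unfolding K_def by (rule gen_of_subgroup[OF generate_is_subgroup]) (use g in simp)
  thus ?thesis unfolding U using cK g(1) unfolding cyclic_subgroup_def K_def by auto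
qed

lemma card_multiples:
  fixes q m :: nat
  assumes q: "q > 0"
  shows "card {i. i < m * q \<and> q dvd i} = m"
proof -
  have "{i. i < m * q \<and> q dvd i} = (\<lambda>j. q * j) ` {..<m}"
  proof
    show "{i. i < m * q \<and> q dvd i} \<subseteq> (\<lambda>j. q * j) ` {..<m}"
    proof clarify
      fix i assume i: "i < m * q" "q dvd i"
      then obtain j where j: "i = q * j" by auto
      hence "j < m" using i(1) q by (simp add: mult.commute)
      thus "i \<in> (\<lambda>j. q * j) ` {..<m}" using j by blast
    qed
  next
    show "(\<lambda>j. q * j) ` {..<m} \<subseteq> {i. i < m * q \<and> q dvd i}"
      using q by (auto simp: mult.commute)
  qed
  moreover have "inj_on (\<lambda>j. q * j) {..<m}" using q by (auto simp: inj_on_def)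
  ultimately show ?thesis by (simp add: card_image)
qed

lemma three_imp_one:
  assumes fin: "finite (carrier G)" and n: "n > 0"
    and H3: "cyclic_subgroup G (generate G (\<Union>{H. cyclic_subgroup G H \<and> card H dvd n}))"
            "card (generate G (\<Union>{H. cyclic_subgroup G H \<and> card H dvd n})) = n"
  shows "\<forall>m. 0 < m \<and> m dvd n \<longrightarrow> card (sols G m) = m"
proof (intro allI impI)
  fix m assume m: "0 < m \<and> m dvd n"
  define K where "K = generate G (\<Union>{H. cyclic_subgroup G H \<and> card H dvd n})"
  obtain g where g: "g \<in> carrier G" "K = generate G {g}" using H3(1) unfolding cyclic_subgroup_def K_def by blast
  have og: "ord g = n" using H3(2) cyc_card[OF g(1)] g(2) unfolding K_def by simp
  obtain q where nq: "n = m * q" using m by auto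
  have q0: "q > 0" using n nq by (auto intro: Nat.gr0I)
  have sK: "sols G m \<subseteq> K"
  proof
    fix x assume "x \<in> sols G m"
    hence x: "x \<in> carrier G" "x [^] m = \<one>" unfolding sols_def by auto
    have "ord x dvd m" using x pow_eq_id by simp
    hence "card (generate G {x}) dvd n" using cyc_card[OF x(1)] m dvd_trans by metis
    hence "generate G {x} \<in> {H. cyclic_subgroup G H \<and> card H dvd n}"
      unfolding cyclic_subgroup_def using x(1) by blast
    hence "x \<in> \<Union>{H. cyclic_subgroup G H \<and> card H dvd n}" using cyc_mem[OF x(1)] by blast
    thus "x \<in> K" unfolding K_def by (rule generate.incl)
  qed
  have Kpow: "K = (\<lambda>i. g [^] i) ` {0..ord g - 1}"
    using g(2) generate_pow_on_finite_carrier[OF fin g(1)] ord_elems[OF fin g(1)] by auto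
  have "sols G m = (\<lambda>i. g [^] i) ` {i \<in> {0..ord g - 1}. q dvd i}"
  proof
    show "sols G m \<subseteq> (\<lambda>i. g [^] i) ` {i \<in> {0..ord g - 1}. q dvd i}"
    proof
      fix x assume x: "x \<in> sols G m"
      then obtain i where i: "i \<in> {0..ord g - 1}" "x = g [^] i" using sK Kpow by blast
      have "g [^] (i * m) = \<one>" using x i g(1) unfolding sols_def by (simp add: nat_pow_pow)
      hence "n dvd i * m" using pow_eq_id g(1) og by simp
      hence "q dvd i" using nq m by (simp add: mult.commute)
      thus "x \<in> (\<lambda>i. g [^] i) ` {i \<in> {0..ord g - 1}. q dvd i}" using i by blast
    qed
  next
    show "(\<lambda>i. g [^] i) ` {i \<in> {0..ord g - 1}. q dvd i} \<subseteq> sols G m"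
    proof clarify
      fix i assume i: "i \<in> {0..ord g - 1}" "q dvd i"
      have "n dvd i * m" using i(2) nq by (auto simp: mult.commute)
      hence "(g [^] i) [^] m = \<one>" using pow_eq_id g(1) og by (simp add: nat_pow_pow)
      thus "g [^] i \<in> sols G m" unfolding sols_def using g(1) by simp
    qed
  qed
  moreover have "inj_on (\<lambda>i. g [^] i) {i \<in> {0..ord g - 1}. q dvd i}"
    by (rule inj_on_subset[OF ord_inj[OF g(1)]]) auto
  moreover have "{i \<in> {0..ord g - 1}. q dvd i} = {i. i < m * q \<and> q dvd i}"
  proof -
    obtain k where k: "ord g = Suc k" using og n by (cases "ord g") auto
    have "{0..ord g - 1} = {..<ord g}" unfolding k by auto
    thus ?thesis using og nq by auto
  qed
  ultimately show "card (sols G m) = m" using card_multiples[OF q0] by (simp add: card_image)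
qed

end

context group begin
lemma odd_pow_inv:
  assumes "t \<in> carrier G" "t [^] (2::nat) = \<one>" "odd m"
  shows "t [^] (m::nat) = t"
proof -
  obtain j where j: "m = 2 * j + 1" using assms(3) oddE by blast
  have "t [^] m = (t [^] (2::nat)) [^] j \<otimes> t [^] (1::nat)" using assms(1) j by (simp add: nat_pow_pow nat_pow_mult)
  thus ?thesis using assms by simp
qed

lemma main_group:
  fixes n :: nat
  assumes "finite (carrier G)"
    and "0 < n" and "n dvd order G"
  shows "num_divisors n \<le> card {H. cyclic_subgroup G H \<and> card H dvd n}
    \<and> ((\<forall>m. 0 < m \<and> m dvd n \<longrightarrow> card {x \<in> carrier G. x [^]\<^bsub>G\<^esub> m = \<one>\<^bsub>G\<^esub>} = m)
           \<longleftrightarrow> card {H. cyclic_subgroup G H \<and> card H dvd n} = num_divisors n)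
    \<and> (card {H. cyclic_subgroup G H \<and> card H dvd n} = num_divisors n
           \<longleftrightarrow> (let K = generate G (\<Union> {H. cyclic_subgroup G H \<and> card H dvd n})
                in cyclic_subgroup G K \<and> card K = n))"
proof -
  have fin: "finite (carrier G)" and n: "n > 0" and nG: "n dvd order G" using assms by auto
  let ?C = "{H. cyclic_subgroup G H \<and> card H dvd n}"
  let ?f = "\<lambda>m. card (sols G m)"
  let ?g = "\<lambda>u. gcd (u - 1) n"
  have solsdef: "\<And>m. {x \<in> carrier G. x [^] m = \<one>} = sols G m" unfolding sols_def by simp
  have ge: "?g u \<le> ?f (?g u)" for u
  proof (rule sols_ge[OF fin])
    show "?g u dvd order G" using nG dvd_trans by blast
    show "?g u > 0" using n by simp
  qed
  have S1: "(\<Sum>u\<in>tot n. ?f (?g u)) = card ?C * phi' n" by (rule sum_sols_gcd[OF fin n])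
  have S2: "(\<Sum>u\<in>tot n. ?g u) = num_divisors n * phi' n" by (rule gcd_sum_tot[OF n])
  have ph: "phi' n > 0" by (rule phi'_nonzero[OF n])
  have "(\<Sum>u\<in>tot n. ?g u) \<le> (\<Sum>u\<in>tot n. ?f (?g u))" by (rule sum_mono) (rule ge)
  hence "num_divisors n * phi' n \<le> card ?C * phi' n" using S1 S2 by simp
  hence ineq: "num_divisors n \<le> card ?C" using ph by simp
  have one_two: "(\<forall>m. 0 < m \<and> m dvd n \<longrightarrow> ?f m = m) \<Longrightarrow> card ?C = num_divisors n"
  proof -
    assume H1: "\<forall>m. 0 < m \<and> m dvd n \<longrightarrow> ?f m = m"
    have "\<And>u. ?f (?g u) = ?g u" using H1 n by simp
    hence "card ?C * phi' n = num_divisors n * phi' n" using S1 S2 by simp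
    thus ?thesis using ph by simp
  qed
  have two_one: "card ?C = num_divisors n \<Longrightarrow> (\<forall>m. 0 < m \<and> m dvd n \<longrightarrow> ?f m = m)"
  proof -
    assume H2: "card ?C = num_divisors n"
    have eqs: "(\<Sum>u\<in>tot n. ?g u) = (\<Sum>u\<in>tot n. ?f (?g u))" using S1 S2 H2 by simp
    have allu: "\<And>u. u \<in> tot n \<Longrightarrow> ?f (?g u) = ?g u"
      using sum_mono_inv[OF eqs ge] by fastforce
    have ach: "\<And>m. m dvd n \<Longrightarrow> odd n \<or> even m \<Longrightarrow> ?f m = m"
    proof -
      fix m assume "m dvd n" "odd n \<or> even m"
      then obtain u where "u \<in> tot n" "?g u = m" using gcd_achieved[OF n] by blast
      thus "?f m = m" using allu by metis
    qed
    show ?thesis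
    proof (intro allI impI)
      fix m assume m: "0 < m \<and> m dvd n"
      show "?f m = m"
      proof (cases "odd n \<or> even m")
        case True thus ?thesis using ach m by blast
      next
        case False
        hence en: "even n" and om: "odd m" by auto
        have "coprime 2 m" using om by simp
        hence m2: "2 * m dvd n" using m en by (simp add: divides_mult)
        have f2: "?f (2 * m) = 2 * m" using ach[OF m2] by simp
        have "2 dvd order G" using en nG dvd_trans by blast
        then obtain t where t: "t \<in> carrier G" "t \<noteq> \<one>" "t [^] (2::nat) = \<one>"
          using cauchy_lite[OF fin two_is_prime_nat] by blast
        have tm: "t [^] m = t" by (rule odd_pow_inv[OF t(1) t(3) om])
        have t2m: "t [^] (2 * m) = \<one>" using t by (simp add: nat_pow_pow[symmetric])
        have sub: "sols G m \<subseteq> sols G (2 * m)" unfolding sols_def using pow_dvd_one by auto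
        have "t \<in> sols G (2 * m)" "t \<notin> sols G m" using t tm t2m unfolding sols_def by auto
        hence "sols G m \<subset> sols G (2 * m)" using sub by blast
        moreover have "finite (sols G (2 * m))" using fin unfolding sols_def by simp
        ultimately have lt: "?f m < 2 * m" using psubset_card_mono f2 by metis
        have "m dvd ?f m" using frobenius[OF is_group fin] m nG dvd_trans by blast
        then obtain a where a: "?f m = m * a" by auto
        have "m \<le> ?f m" using sols_ge[OF fin] m nG dvd_trans by blast
        hence "a \<ge> 1" using a m by (cases a) auto
        moreover have "a < 2" using lt a m by simp
        ultimately show ?thesis using a by simp
      qed
    qed
  qed
  have three: "(let K = generate G (\<Union> ?C) in cyclic_subgroup G K \<and> card K = n)
      \<longleftrightarrow> (\<forall>m. 0 < m \<and> m dvd n \<longrightarrow> ?f m = m)"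
    using one_imp_three[OF fin n] three_imp_one[OF fin n] unfolding Let_def by blast
  show ?thesis unfolding solsdef using ineq one_two two_one three by blast
qed
end

theorem corollary3p1:
  fixes G :: "('a, 'b) monoid_scheme" and n :: nat
  assumes "group G" and "finite (carrier G)"
    and "0 < n" and "n dvd order G"
  shows "num_divisors n \<le> card {H. cyclic_subgroup G H \<and> card H dvd n}
    \<and> ((\<forall>m. 0 < m \<and> m dvd n \<longrightarrow> card {x \<in> carrier G. x [^]\<^bsub>G\<^esub> m = \<one>\<^bsub>G\<^esub>} = m)
           \<longleftrightarrow> card {H. cyclic_subgroup G H \<and> card H dvd n} = num_divisors n)
    \<and> (card {H. cyclic_subgroup G H \<and> card H dvd n} = num_divisors n
           \<longleftrightarrow> (let K = generate G (\<Union> {H. cyclic_subgroup G H \<and> card H dvd n})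
                in cyclic_subgroup G K \<and> card K = n))"
  using group.main_group[OF assms] .

end
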